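(* If $(X,d_X)$ is a locally finite metric space (every bounded subset is finite), then $\Delta_X^{(c)}(R)\leq R$ for all $R\in[0,\infty)$. Consequently, for every $\varepsilon>0$, every locally finite metric space $(2+\varepsilon)$-Lipschitz embeds into $c_0^+$.
   Context: For a cover $\mathcal{U}$ of $X$: $\mathrm{diam}(\mathcal{U})=\sup_{U\in\mathcal{U}}\mathrm{diam}(U)$; $\mathcal{L}(\mathcal{U})=\sup\{d\in[0,\infty): \text{every } E\subseteq X \text{ with } \mathrm{diam}(E)<d \text{ is contained in some } U\in\mathcal{U}\}$; point-finite means each point lies in only finitely many members. $\Delta_X^{(c)}(R)=\inf\{\mathrm{diam}(\mathcal{U}): \mathcal{U} \text{ point-finite cover of } X,\ \mathcal{L}(\mathcal{U})\geq R\}$. $c_0^+=\{(x_i)_{i\in\mathbb{N}}\in c_0: x_i\geq0\ \forall i\}$ with the sup-norm metric. A map $f$ is a $K$-Lipschitz embedding if it is injective and $\mathrm{Lip}(f)\cdot\mathrm{Lip}(f^{-1})\leq K$, where $\mathrm{Lip}$ denotes the Lipschitz constant. *)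

theory Defs
  imports "HOL-Analysis.Analysis"
begin

definition ediam :: "'a::metric_space set \<Rightarrow> ereal" where
  "ediam S = (if S = {} then 0 else (SUP p\<in>S \<times> S. ereal (dist (fst p) (snd p))))"

definition cover_diam :: "'a::metric_space set set \<Rightarrow> ereal" where
  "cover_diam \<U> = (SUP U\<in>\<U>. ediam U)"

definition lebesgue_num :: "'a::metric_space set \<Rightarrow> 'a set set \<Rightarrow> ereal" where
  "lebesgue_num X \<U> = Sup {ereal d | d. 0 \<le> d \<and>
      (\<forall>E. E \<subseteq> X \<and> ediam E < ereal d \<longrightarrow> (\<exists>U\<in>\<U>. E \<subseteq> U))}"

definition is_cover :: "'a set \<Rightarrow> 'a set set \<Rightarrow> bool" where
  "is_cover X \<U> \<longleftrightarrow> (\<forall>U\<in>\<U>. U \<subseteq> X) \<and> \<Union>\<U> = X"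

definition point_finite :: "'a set set \<Rightarrow> bool" where
  "point_finite \<U> \<longleftrightarrow> (\<forall>x. finite {U\<in>\<U>. x \<in> U})"

definition Delta_c :: "'a::metric_space set \<Rightarrow> real \<Rightarrow> ereal" where
  "Delta_c X R = Inf {cover_diam \<U> | \<U>. is_cover X \<U> \<and> point_finite \<U> \<and> lebesgue_num X \<U> \<ge> ereal R}"

definition locally_finite_metric :: "'a::metric_space set \<Rightarrow> bool" where
  "locally_finite_metric X \<longleftrightarrow> (\<forall>S. S \<subseteq> X \<and> bounded S \<longrightarrow> finite S)"

text \<open>c_0^+ realised inside the bounded (continuous) functions nat \<Rightarrow> real with the sup metric.\<close>
definition c0_plus :: "(nat \<Rightarrow>\<^sub>C real) set" where
  "c0_plus = {x. (\<lambda>i. apply_bcontfun x i) \<longlonglongrightarrow> 0 \<and> (\<forall>i. 0 \<le> apply_bcontfun x i)}"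

text \<open>f is a K-Lipschitz embedding of X into Y:
  injective, and Lip(f) * Lip(f^{-1}) \<le> K (Lipschitz constants being the least
  admissible constants, which are attained).\<close>
definition lipschitz_embedding :: "real \<Rightarrow> 'a::metric_space set \<Rightarrow> 'b::metric_space set \<Rightarrow> ('a \<Rightarrow> 'b) \<Rightarrow> bool" where
  "lipschitz_embedding K X Y f \<longleftrightarrow> inj_on f X \<and> f ` X \<subseteq> Y \<and>
     (\<exists>C D. C-lipschitz_on X f \<and> D-lipschitz_on (f ` X) (the_inv_into X f) \<and> C * D \<le> K)"

end

theory Submission
  imports Defs
begin

lemma ediam_ge: "x \<in> E \<Longrightarrow> y \<in> E \<Longrightarrow> ereal (dist x y) \<le> ediam E"
  unfolding ediam_def by (auto intro!: SUP_upper2[of "(x,y)"])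

lemma ediam_single: "ediam {x} = 0"
  unfolding ediam_def by simp

lemma part1:
  fixes X :: "'a::metric_space set"
  assumes lf: "locally_finite_metric X" and R: "0 \<le> R"
  shows "Delta_c X R \<le> ereal R"
proof -
  define U where "U = {E. E \<subseteq> X \<and> ediam E \<le> ereal R}"
  have cov: "is_cover X U"
    unfolding is_cover_def U_def
  proof (intro conjI ballI)
    show "\<Union> {E. E \<subseteq> X \<and> ediam E \<le> ereal R} = X"
    proof
      show "X \<subseteq> \<Union> {E. E \<subseteq> X \<and> ediam E \<le> ereal R}"
      proof
        fix x assume "x \<in> X"
        then show "x \<in> \<Union> {E. E \<subseteq> X \<and> ediam E \<le> ereal R}"
          using R by (auto intro!: exI[of _ "{x}"] simp: ediam_single)
      qed
    qed auto
  qed auto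
  have pf: "point_finite U"
    unfolding point_finite_def
  proof
    fix x
    have "finite (X \<inter> cball x R)"
      using lf unfolding locally_finite_metric_def by auto
    moreover have "{V \<in> U. x \<in> V} \<subseteq> Pow (X \<inter> cball x R)"
    proof
      fix V assume "V \<in> {V \<in> U. x \<in> V}"
      then have V: "V \<subseteq> X" "ediam V \<le> ereal R" "x \<in> V" unfolding U_def by auto
      have "V \<subseteq> cball x R"
      proof
        fix y assume "y \<in> V"
        then have "ereal (dist x y) \<le> ereal R" using ediam_ge[OF V(3)] V(2) order_trans by blast
        then show "y \<in> cball x R" by simp
      qed
      then show "V \<in> Pow (X \<inter> cball x R)" using V by auto
    qed
    ultimately show "finite {V \<in> U. x \<in> V}" by (meson finite_Pow_iff finite_subset)
  qed
  have cd: "cover_diam U \<le> ereal R"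
    unfolding cover_diam_def U_def by (auto intro!: SUP_least)
  have ln: "lebesgue_num X U \<ge> ereal R"
    unfolding lebesgue_num_def
    by (rule Sup_upper) (use R in \<open>auto simp: U_def intro!: exI[of _ R]\<close>)
  have "Delta_c X R \<le> cover_diam U"
    unfolding Delta_c_def using cov pf ln by (auto intro!: Inf_lower)
  then show ?thesis using cd by simp
qed

lemma tendsto_zero_finite:
  fixes a :: "nat \<Rightarrow> real"
  assumes "\<And>e. e > 0 \<Longrightarrow> finite {n. e \<le> \<bar>a n\<bar>}"
  shows "a \<longlonglongrightarrow> 0"
proof (rule LIMSEQ_I)
  fix r :: real assume r: "0 < r"
  from assms[OF r] obtain N where N: "\<And>n. n \<in> {n. r \<le> \<bar>a n\<bar>} \<Longrightarrow> n < N"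
    by (meson finite_nat_set_iff_bounded)
  show "\<exists>no. \<forall>n\<ge>no. norm (a n - 0) < r"
  proof (intro exI[of _ N] allI impI)
    fix n assume "N \<le> n"
    then have "\<not> r \<le> \<bar>a n\<bar>" using N[of n] by auto
    then show "norm (a n - 0) < r" by simp
  qed
qed

lemma part2:
  fixes X :: "'a::metric_space set" and \<epsilon> :: real
  assumes lf: "locally_finite_metric X" and e: "\<epsilon> > 0"
  shows "\<exists>f::'a \<Rightarrow> (nat \<Rightarrow>\<^sub>C real). lipschitz_embedding (2 + \<epsilon>) X c0_plus f"
proof -
  define x0 :: 'a where "x0 = undefined"
  define \<theta> :: real where "\<theta> = 2 / (2 + \<epsilon>)"
  have th: "0 < \<theta>" "\<theta> < 1" using e by (auto simp: \<theta>_def)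
  define I where "I = (\<lambda>(y,z). (y, min (dist y z) (\<theta> * dist y x0))) ` (X \<times> X)"
  define phi where "phi = (\<lambda>(i::'a \<times> real) x. max 0 (snd i - dist x (fst i)))"
  have finX: "\<And>c r. finite (X \<inter> cball c r)"
    using lf unfolding locally_finite_metric_def by auto
  have cX: "countable X"
  proof -
    have "X = (\<Union>n::nat. X \<inter> cball x0 (real n))"
    proof (intro equalityI subsetI)
      fix x assume "x \<in> X"
      obtain n :: nat where "dist x0 x \<le> real n" using real_arch_simple by blast
      then show "x \<in> (\<Union>n::nat. X \<inter> cball x0 (real n))" using \<open>x \<in> X\<close> by auto
    qed auto
    also have "countable \<dots>"
    proof (rule countable_UN)
      fix n :: nat
      show "countable (X \<inter> cball x0 (real n))" using finX by (rule countable_finite)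
    qed simp
    finally show ?thesis .
  qed
  have cI: "countable I" unfolding I_def using cX by auto
  have Ir: "\<And>y r. (y, r) \<in> I \<Longrightarrow> y \<in> X \<and> 0 \<le> r \<and> r \<le> \<theta> * dist y x0 \<and>
        (r = \<theta> * dist y x0 \<or> (\<exists>z\<in>X. r = dist y z \<and> dist y z \<le> \<theta> * dist y x0))"
  proof -
    fix y r assume "(y, r) \<in> I"
    then obtain z where z: "y \<in> X" "z \<in> X" "r = min (dist y z) (\<theta> * dist y x0)"
      unfolding I_def by auto
    have "0 \<le> \<theta> * dist y x0" using th by simp
    then show "y \<in> X \<and> 0 \<le> r \<and> r \<le> \<theta> * dist y x0 \<and>
        (r = \<theta> * dist y x0 \<or> (\<exists>z\<in>X. r = dist y z \<and> dist y z \<le> \<theta> * dist y x0))"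
      using z by (cases "dist y z \<le> \<theta> * dist y x0") (auto simp: min_def)
  qed
  have lip: "\<And>i a b. \<bar>phi i a - phi i b\<bar> \<le> dist a b"
    unfolding phi_def by (auto simp: abs_le_iff max_def) (smt (verit) dist_triangle2 dist_commute)+
  have nn: "\<And>i x. 0 \<le> phi i x" unfolding phi_def by auto
  have bnd: "\<And>i x. i \<in> I \<Longrightarrow> phi i x \<le> \<theta> * dist x x0"
  proof -
    fix i x assume "i \<in> I"
    obtain y r where i: "i = (y, r)" by force
    have r: "r \<le> \<theta> * dist y x0" using Ir \<open>i \<in> I\<close> i by blast
    have "dist y x0 \<le> dist x y + dist x x0" by (metis dist_commute dist_triangle)
    then have "\<theta> * dist y x0 \<le> \<theta> * dist x y + \<theta> * dist x x0"
      using th by (metis distrib_left mult_left_mono less_imp_le)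
    moreover have "\<theta> * dist x y \<le> dist x y" using th by (intro mult_left_le_one_le) auto
    ultimately show "phi i x \<le> \<theta> * dist x x0"
      using r th unfolding phi_def i by (auto simp: max_def)
  qed
  have fin: "\<And>x \<eta>. \<eta> > 0 \<Longrightarrow> finite {i\<in>I. \<eta> \<le> phi i x}"
  proof -
    fix x and \<eta> :: real assume eta: "\<eta> > 0"
    define F where "F = X \<inter> cball x (\<theta> * dist x x0 / (1 - \<theta>))"
    have "{i\<in>I. \<eta> \<le> phi i x} \<subseteq>
        Sigma F (\<lambda>y. insert (\<theta> * dist y x0) (dist y ` (X \<inter> cball y (\<theta> * dist y x0))))"
    proof
      fix i assume "i \<in> {i\<in>I. \<eta> \<le> phi i x}"
      then obtain y r where i: "i = (y, r)" "(y,r) \<in> I" and p: "\<eta> \<le> max 0 (r - dist x y)"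
        unfolding phi_def by (cases i) auto
      note Ii = Ir[OF i(2)]
      have "dist x y < r" using p eta by (auto simp: max_def split: if_splits)
      then have lt: "dist x y < \<theta> * dist y x0" using Ii by linarith
      have "dist y x0 \<le> dist x y + dist x x0" by (metis dist_commute dist_triangle)
      then have "\<theta> * dist y x0 \<le> \<theta> * dist x y + \<theta> * dist x x0"
        using th by (metis distrib_left mult_left_mono less_imp_le)
      then have "(1 - \<theta>) * dist x y \<le> \<theta> * dist x x0" using lt by (simp add: algebra_simps)
      then have "dist x y \<le> \<theta> * dist x x0 / (1 - \<theta>)" using th by (simp add: field_simps)
      then have "y \<in> F" unfolding F_def using Ii by auto
      moreover have "r \<in> insert (\<theta> * dist y x0) (dist y ` (X \<inter> cball y (\<theta> * dist y x0)))"
        using Ii by auto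
      ultimately show "i \<in> Sigma F (\<lambda>y. insert (\<theta> * dist y x0) (dist y ` (X \<inter> cball y (\<theta> * dist y x0))))"
        using i by auto
    qed
    moreover have "finite (Sigma F (\<lambda>y. insert (\<theta> * dist y x0) (dist y ` (X \<inter> cball y (\<theta> * dist y x0)))))"
      unfolding F_def using finX by (intro finite_SigmaI) auto
    ultimately show "finite {i\<in>I. \<eta> \<le> phi i x}" by (rule finite_subset)
  qed
  have sep: "\<And>a b. a \<in> X \<Longrightarrow> b \<in> X \<Longrightarrow> \<exists>i\<in>I. \<theta> / 2 * dist a b \<le> \<bar>phi i a - phi i b\<bar>"
  proof -
    have one: "\<exists>i\<in>I. \<theta> / 2 * dist a b \<le> \<bar>phi i a - phi i b\<bar>"
      if ab: "a \<in> X" "b \<in> X" "dist a x0 \<le> dist b x0" for a b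
    proof -
      define r where "r = min (dist b a) (\<theta> * dist b x0)"
      have iI: "(b, r) \<in> I" unfolding I_def r_def using ab by force
      have "dist a b \<le> dist a x0 + dist b x0" by (metis dist_commute dist_triangle)
      then have d2: "dist a b \<le> 2 * dist b x0" using ab by simp
      have r0: "0 \<le> r" unfolding r_def using th by simp
      have "phi (b, r) b = r" unfolding phi_def using r0 by simp
      moreover have "phi (b, r) a = 0" unfolding phi_def r_def by (simp add: dist_commute)
      moreover have "\<theta> / 2 * dist a b \<le> r"
      proof -
        have "\<theta> / 2 * dist a b \<le> dist a b" using th by (intro mult_left_le_one_le) auto
        moreover have "\<theta> / 2 * dist a b \<le> \<theta> * dist b x0" using d2 th by simp
        ultimately show ?thesis unfolding r_def by (simp add: dist_commute)
      qed
      ultimately show ?thesis using iI r0 by force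
    qed
    fix a b assume "a \<in> X" "b \<in> X"
    show "\<exists>i\<in>I. \<theta> / 2 * dist a b \<le> \<bar>phi i a - phi i b\<bar>"
    proof (cases "dist a x0 \<le> dist b x0")
      case True then show ?thesis using one \<open>a \<in> X\<close> \<open>b \<in> X\<close> by blast
    next
      case False
      then obtain i where "i \<in> I" "\<theta> / 2 * dist b a \<le> \<bar>phi i b - phi i a\<bar>"
        using one[of b a] \<open>a \<in> X\<close> \<open>b \<in> X\<close> by auto
      then show ?thesis by (auto simp: dist_commute abs_minus_commute)
    qed
  qed
  define g where "g = (\<lambda>x n. if n \<in> to_nat_on I ` I then phi (from_nat_into I n) x else 0)"
  have gbc: "\<And>x. g x \<in> bcontfun"
  proof -
    fix x
    show "g x \<in> bcontfun"
    proof (rule bcontfun_normI)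
      show "continuous_on UNIV (g x)" by simp
      fix n
      show "norm (g x n) \<le> \<theta> * dist x x0"
        unfolding g_def using bnd nn th cI
        by (auto simp: from_nat_into[of I] intro: from_nat_into)
    qed
  qed
  define f where "f = (\<lambda>x. Bcontfun (g x))"
  have fg: "\<And>x n. apply_bcontfun (f x) n = g x n"
    unfolding f_def using gbc by (simp add: Bcontfun_inverse)
  have glip: "\<And>a b n. dist (g a n) (g b n) \<le> dist a b"
    unfolding g_def dist_real_def using lip by auto
  have flip: "\<And>a b. dist (f a) (f b) \<le> dist a b"
    by (rule dist_bound) (simp add: fg glip)
  have flow: "\<And>a b. a \<in> X \<Longrightarrow> b \<in> X \<Longrightarrow> \<theta> / 2 * dist a b \<le> dist (f a) (f b)"
  proof -
    fix a b assume "a \<in> X" "b \<in> X"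
    then obtain i where i: "i \<in> I" "\<theta> / 2 * dist a b \<le> \<bar>phi i a - phi i b\<bar>" using sep by blast
    have "\<bar>phi i a - phi i b\<bar> = dist (f a (to_nat_on I i)) (f b (to_nat_on I i))"
      using i cI by (simp add: fg g_def dist_real_def)
    also have "\<dots> \<le> dist (f a) (f b)" by (rule dist_bounded)
    finally show "\<theta> / 2 * dist a b \<le> dist (f a) (f b)" using i by simp
  qed
  have inj: "inj_on f X"
  proof (rule inj_onI)
    fix a b assume "a \<in> X" "b \<in> X" "f a = f b"
    then have "\<theta> / 2 * dist a b \<le> 0" using flow[of a b] by simp
    then show "a = b" using th by (simp add: mult_le_0_iff)
  qed
  have inc0: "f ` X \<subseteq> c0_plus"
  proof
    fix u assume "u \<in> f ` X"
    then obtain x where u: "u = f x" by blast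
    have "(\<lambda>n. g x n) \<longlonglongrightarrow> 0"
    proof (rule tendsto_zero_finite)
      fix \<eta> :: real assume eta: "\<eta> > 0"
      have "{n. \<eta> \<le> \<bar>g x n\<bar>} \<subseteq> to_nat_on I ` {i\<in>I. \<eta> \<le> phi i x}"
      proof
        fix n assume "n \<in> {n. \<eta> \<le> \<bar>g x n\<bar>}"
        then have n: "\<eta> \<le> \<bar>g x n\<bar>" by simp
        then have "n \<in> to_nat_on I ` I" unfolding g_def using eta by (auto split: if_splits)
        then obtain i where i: "i \<in> I" "n = to_nat_on I i" by blast
        then have "\<eta> \<le> phi i x" using n cI nn by (simp add: g_def)
        then show "n \<in> to_nat_on I ` {i\<in>I. \<eta> \<le> phi i x}" using i by auto
      qed
      then show "finite {n. \<eta> \<le> \<bar>g x n\<bar>}" using fin[OF eta] finite_surj by blast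
    qed
    moreover have "\<forall>n. 0 \<le> g x n" unfolding g_def using nn by auto
    moreover have "apply_bcontfun (f x) = g x" by (rule ext) (simp add: fg)
    ultimately show "u \<in> c0_plus" unfolding c0_plus_def u by simp
  qed
  have L1: "1-lipschitz_on X f" using flip by (auto intro!: lipschitz_onI)
  have L2: "(2 / \<theta>)-lipschitz_on (f ` X) (the_inv_into X f)"
  proof (rule lipschitz_onI)
    fix u v assume "u \<in> f ` X" "v \<in> f ` X"
    then obtain a b where ab: "a \<in> X" "b \<in> X" "u = f a" "v = f b" by blast
    have "dist a b \<le> 2 / \<theta> * dist (f a) (f b)"
      using flow[OF ab(1,2)] th by (simp add: field_simps)
    then show "dist (the_inv_into X f u) (the_inv_into X f v) \<le> 2 / \<theta> * dist u v"
      using ab inj by (simp add: the_inv_into_f_f)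
  next
    show "0 \<le> 2 / \<theta>" using th by simp
  qed
  have "1 * (2 / \<theta>) \<le> 2 + \<epsilon>" using e by (simp add: \<theta>_def)
  then show ?thesis unfolding lipschitz_embedding_def using inj inc0 L1 L2 by blast
qed

theorem proposition4p1:
  "(\<forall>(X::'a::metric_space set). locally_finite_metric X \<longrightarrow>
        (\<forall>R::real. 0 \<le> R \<longrightarrow> Delta_c X R \<le> ereal R))
   \<and> (\<forall>\<epsilon>::real. \<epsilon> > 0 \<longrightarrow>
        (\<forall>(X::'a::metric_space set). locally_finite_metric X \<longrightarrow>
           (\<exists>f::'a \<Rightarrow> (nat \<Rightarrow>\<^sub>C real). lipschitz_embedding (2 + \<epsilon>) X c0_plus f)))"
  using part1 part2 by blast

end
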